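(* Let $n\ge4$ be even, $f>0$, and let $(\mathcal{S},\Gamma)$ be the caterpillar species tree described in the context. Let $\mathcal{T}_1$ be a gene tree drawn from the multispecies coalescent on $(\mathcal{S},\Gamma)$. Then $$\mathrm{Var}\big[d_{\mathrm g}^{\mathcal{T}_1}(a,b)\big]\ \ge\ \frac{n-2}{2}\,\mathrm{Var}\big[X_1\,\big|\,\mathcal{F}_1\big]\;\mathbf{P}[\mathcal{F}].$$
   Context: The caterpillar species tree: for even $n\ge4$, $\mathcal{S}$ is a rooted binary tree with leaves $a,b,x_1,\dots,x_{n/2-1},y_1,\dots,y_{n/2-1}$. Its backbone is the path $(a,w_1),(w_1,z_1),(z_1,w_2),(w_2,z_2),\dots,(w_{(n-2)/2},z_{(n-2)/2}),(z_{(n-2)/2},r)$ from leaf $a$ to the root $r=w_{n/2}$; each $w_i$ ($1\le i\le n/2-1$) has a pendant edge $(w_i,x_i)$ to leaf $x_i$, each $z_i$ has a pendant edge $(z_i,y_i)$ to leaf $y_i$, and $r$ has a pendant edge $(r,b)$ to leaf $b$. Each edge $(w_i,z_i)$ has length $f$; every other edge has length $g=4\log n$. The $i$-th block is the two-edge path $\{(w_i,z_i),(z_i,w_{i+1})\}$, $i=1,\dots,(n-2)/2$. Multispecies coalescent: one lineage per leaf; going backwards in time, within each branch each pair of lineages coalesces at rate 1 independently for the length of the branch; lineages of child populations are pooled at internal nodes; above the root coalescence continues until one lineage remains; $\mathcal{T}_1$ is the resulting unrooted topology and $d_{\mathrm g}^{\mathcal{T}_1}(a,b)$ the number of edges on the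 $a$–$b$ path in it. $\mathcal{F}_i$ is the event that all lineages entering $(z_i,w_{i+1})$ have coalesced into one lineage before reaching $w_{i+1}$, and $\mathcal{F}=\bigcap_i\mathcal{F}_i$. $X_i$ is the number of coalescence events occurring in the populations $(w_i,z_i)$ or $(z_i,w_{i+1})$ (the $i$-th block) in which one of the two merging lineages is ancestral to $a$ (i.e. the number of lineages coalescing into the path between $a$ and $b$ on the $i$-th block). *)

theory Defs
  imports "HOL-Probability.Probability"
begin

text \<open>Nd v l sl r sr: internal node labelled v with children l, r; sl, sr are the
  lengths of the edges from v to l and to r.  The population of an edge is named by
  the label of its lower endpoint (child).\<close>

datatype 'l stree = Lf 'l | Nd 'l "'l stree" real "'l stree" real

primrec label :: "'l stree \<Rightarrow> 'l" where
  "label (Lf x) = x"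
| "label (Nd v l sl r sr) = v"

primrec leaves :: "'l stree \<Rightarrow> 'l set" where
  "leaves (Lf x) = {x}"
| "leaves (Nd v l sl r sr) = leaves l \<union> leaves r"

text \<open>Probability that, starting with k lineages, at least m coalescences happen within
  time t: the sum of the first m exponential holding times (rates C(k,2), C(k-1,2), ...)
  is at most t.  At most k-1 coalescences can ever happen.\<close>

definition hold_le :: "nat \<Rightarrow> real \<Rightarrow> nat \<Rightarrow> real" where
  "hold_le k t m =
     (if m = 0 then 1
      else if m < k then
        measure (PiM {..<m} (\<lambda>j. density lborel (exponential_density (real ((k - j) choose 2)))))
          {x \<in> space (PiM {..<m} (\<lambda>j. density lborel (exponential_density (real ((k - j) choose 2))))).
             (\<Sum>j<m. x j) \<le> t}
      else 0)"

definition coal_count :: "nat \<Rightarrow> real \<Rightarrow> nat pmf" where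
  "coal_count k t = embed_pmf (\<lambda>m. hold_le k t m - hold_le k t (Suc m))"

text \<open>A coalescence event: (population, merged lineage, merged lineage); lineages are
  represented by their sets of descendant leaves.  Population None = above the root.\<close>
type_synonym 'l event = "'l option \<times> 'l set \<times> 'l set"

fun merge_steps :: "'l option \<Rightarrow> nat \<Rightarrow> 'l set set \<Rightarrow> ('l event list \<times> 'l set set) pmf" where
  "merge_steps p 0 L = return_pmf ([], L)"
| "merge_steps p (Suc m) L =
     (if card L < 2 then return_pmf ([], L) else
      bind_pmf (pmf_of_set {(A, B). A \<in> L \<and> B \<in> L \<and> A \<noteq> B}) (\<lambda>(A, B).
        map_pmf (\<lambda>(es, L'). ((p, A, B) # es, L'))
          (merge_steps p m (insert (A \<union> B) (L - {A, B})))))"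

definition branch :: "'l \<Rightarrow> real \<Rightarrow> 'l set set \<Rightarrow> ('l event list \<times> 'l set set) pmf" where
  "branch p t L = bind_pmf (coal_count (card L) t) (\<lambda>m. merge_steps (Some p) m L)"

text \<open>sim T: events inside the subtree T, lineages exiting each population of T
  (at its upper end), and the lineages present at the root node of T.\<close>
primrec sim :: "'l stree \<Rightarrow> ('l event list \<times> ('l \<Rightarrow> 'l set set) \<times> 'l set set) pmf" where
  "sim (Lf x) = return_pmf ([], (\<lambda>_. {}), {{x}})"
| "sim (Nd v l sl r sr) =
     bind_pmf (sim l) (\<lambda>(e1, x1, L1).
     bind_pmf (sim r) (\<lambda>(e2, x2, L2).
     bind_pmf (branch (label l) sl L1) (\<lambda>(f1, L1').
     bind_pmf (branch (label r) sr L2) (\<lambda>(f2, L2').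
       return_pmf (e1 @ e2 @ f1 @ f2,
                   (\<lambda>w. x1 w \<union> x2 w)(label l := L1', label r := L2'),
                   L1' \<union> L2')))))"

definition msc :: "'l stree \<Rightarrow> ('l event list \<times> ('l \<Rightarrow> 'l set set)) pmf" where
  "msc T = bind_pmf (sim T) (\<lambda>(e, x, L).
     map_pmf (\<lambda>(f, L'). (e @ f, x)) (merge_steps None (card L - 1) L))"

definition gt_clusters :: "'l set \<Rightarrow> 'l event list \<Rightarrow> 'l set set" where
  "gt_clusters Lv evs = (\<lambda>x. {x}) ` Lv \<union> (\<lambda>(p, c1, c2). c1 \<union> c2) ` set evs"

text \<open>Number of edges on the a--b path of the unrooted gene tree topology: the edges on
  the rooted path are the edges above clusters separating a and b; when the lowest
  common ancestor is the root, the two root edges are merged into one by unrooting.\<close>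
definition gt_dist :: "'l set \<Rightarrow> 'l event list \<Rightarrow> 'l \<Rightarrow> 'l \<Rightarrow> nat" where
  "gt_dist Lv evs a b =
     card {C \<in> gt_clusters Lv evs. a \<in> C \<and> b \<notin> C}
   + card {C \<in> gt_clusters Lv evs. b \<in> C \<and> a \<notin> C}
   - (if \<forall>C \<in> gt_clusters Lv evs. a \<in> C \<and> b \<in> C \<longrightarrow> C = Lv then 1 else 0)"

datatype cnode = A | B | X nat | Y nat | W nat | Z nat

text \<open>wt f g j is the subtree rooted at w_(j+1) (a non-root backbone node).\<close>
primrec wt :: "real \<Rightarrow> real \<Rightarrow> nat \<Rightarrow> cnode stree" where
  "wt f g 0 = Nd (W 1) (Lf A) g (Lf (X 1)) g"
| "wt f g (Suc j) =
     Nd (W (j + 2)) (Nd (Z (j + 1)) (wt f g j) f (Lf (Y (j + 1))) g) g (Lf (X (j + 2))) g"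

definition cat_g :: "nat \<Rightarrow> real" where
  "cat_g n = 4 * ln (real n)"

definition caterpillar :: "nat \<Rightarrow> real \<Rightarrow> cnode stree" where
  "caterpillar n f =
     (let h = n div 2; g = cat_g n in
      Nd (W h) (Nd (Z (h - 1)) (wt f g (h - 2)) f (Lf (Y (h - 1))) g) g (Lf B) g)"

text \<open>X_i: coalescences in populations (w_i,z_i) [named W i] or (z_i,w_(i+1)) [named Z i]
  in which one merging lineage is ancestral to a.\<close>
definition Xcnt :: "nat \<Rightarrow> cnode event list \<times> (cnode \<Rightarrow> cnode set set) \<Rightarrow> nat" where
  "Xcnt i \<omega> = length (filter (\<lambda>(p, c1, c2). (p = Some (W i) \<or> p = Some (Z i)) \<and> (A \<in> c1 \<or> A \<in> c2))
                         (fst \<omega>))"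

definition Fev :: "nat \<Rightarrow> (cnode event list \<times> (cnode \<Rightarrow> cnode set set)) set" where
  "Fev i = {\<omega>. card (snd \<omega> (Z i)) = 1}"

definition Fall :: "nat \<Rightarrow> (cnode event list \<times> (cnode \<Rightarrow> cnode set set)) set" where
  "Fall n = (\<Inter>i\<in>{1..(n - 2) div 2}. Fev i)"

definition dab :: "nat \<Rightarrow> real \<Rightarrow> cnode event list \<times> (cnode \<Rightarrow> cnode set set) \<Rightarrow> nat" where
  "dab n f \<omega> = gt_dist (leaves (caterpillar n f)) (fst \<omega>) A B"

end

theory Submission
  imports Defs
begin

lemma ms_small: "card L < 2 \<Longrightarrow> merge_steps p m L = return_pmf ([], L)"
  by (cases m) auto

lemma ms_two:
  assumes "P \<noteq> Q"
  shows "merge_steps p (Suc m) {P,Q} = map_pmf (\<lambda>(a,b). ([(p,a,b)], {P\<union>Q})) (pmf_of_set {(P,Q),(Q,P)})"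
proof -
  have pr: "{(a, b). (a = P \<or> a = Q) \<and> (b = P \<or> b = Q) \<and> a \<noteq> b} = {(P,Q),(Q,P)}" using assms by auto
  have "merge_steps p (Suc m) {P,Q} = bind_pmf (pmf_of_set {(P,Q),(Q,P)}) (\<lambda>(a,b).
        map_pmf (\<lambda>(es, L'). ((p, a, b) # es, L')) (merge_steps p m (insert (a \<union> b) ({P,Q} - {a, b}))))"
    using assms by (simp add: pr)
  also have "\<dots> = bind_pmf (pmf_of_set {(P,Q),(Q,P)}) (\<lambda>ab. return_pmf ((\<lambda>(a,b). ([(p,a,b)], {P\<union>Q})) ab))"
  proof (rule bind_pmf_cong[OF refl])
    fix ab assume "ab \<in> set_pmf (pmf_of_set {(P,Q),(Q,P)})"
    then have "ab \<in> {(P,Q),(Q,P)}" by simp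
    then show "(\<lambda>(a,b). map_pmf (\<lambda>(es, L'). ((p, a, b) # es, L')) (merge_steps p m (insert (a \<union> b) ({P,Q} - {a, b})))) ab = return_pmf ((\<lambda>(a,b). ([(p,a,b)], {P\<union>Q})) ab)"
      by (auto simp: ms_small Un_commute insert_Diff_if)
  qed
  finally show ?thesis by (simp add: map_pmf_def)
qed

lemma ms_suc: "\<not> card L < 2 \<Longrightarrow> merge_steps p (Suc m) L = bind_pmf (pmf_of_set {(A, B). A \<in> L \<and> B \<in> L \<and> A \<noteq> B}) (\<lambda>(A,B).
        map_pmf (\<lambda>(es, L'). ((p, A, B) # es, L')) (merge_steps p m (insert (A \<union> B) (L - {A, B}))))"
  by (simp only: merge_steps.simps(2) if_not_P if_False)

definition P3set :: "(nat \<times> nat) set" where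
  "P3set = {(0,1),(0,2),(1,0),(1,2),(2,0),(2,1)}"

definition P3 :: "(nat \<times> nat) pmf" where "P3 = pmf_of_set P3set"

lemma P3set_ne: "P3set \<noteq> {}" and P3set_fin: "finite P3set"
  by (auto simp: P3set_def)

lemma set_P3[simp]: "set_pmf P3 = P3set"
  by (simp add: P3_def P3set_ne P3set_fin)

definition sig :: "'a set \<Rightarrow> 'a \<Rightarrow> 'a \<Rightarrow> nat \<Rightarrow> 'a set" where
  "sig C x y i = (if i = 0 then C else if i = 1 then {x} else {y})"

lemma ms3:
  assumes "C \<noteq> {x}" "C \<noteq> {y}" "x \<noteq> y"
  shows "merge_steps q (Suc m) {C,{x},{y}} = bind_pmf P3 (\<lambda>(i,j).
     map_pmf (\<lambda>(es,L'). ((q, sig C x y i, sig C x y j)#es, L'))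
       (merge_steps q m (insert (sig C x y i \<union> sig C x y j) ({C,{x},{y}} - {sig C x y i, sig C x y j}))))"
proof -
  let ?s = "sig C x y"
  have c3: "\<not> card {C,{x},{y}} < 2" using assms by auto
  have pe: "{(a, b). a \<in> {C,{x},{y}} \<and> b \<in> {C,{x},{y}} \<and> a \<noteq> b} = (\<lambda>(i,j). (?s i, ?s j)) ` P3set"
    using assms by (auto simp: P3set_def sig_def)
  have inj: "inj_on (\<lambda>(i,j). (?s i, ?s j)) P3set"
    using assms by (auto simp: P3set_def sig_def inj_on_def)
  have "pmf_of_set {(a, b). a \<in> {C,{x},{y}} \<and> b \<in> {C,{x},{y}} \<and> a \<noteq> b} = map_pmf (\<lambda>(i,j). (?s i, ?s j)) P3"
    unfolding pe P3_def by (rule map_pmf_of_set_inj[symmetric, OF inj P3set_ne P3set_fin])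
  then show ?thesis
    by (simp only: ms_suc[OF c3] bind_map_pmf) (rule bind_pmf_cong, auto)
qed

definition Ainv :: "cnode event \<Rightarrow> bool" where
  "Ainv v = (A \<in> fst (snd v) \<or> A \<in> snd (snd v))"
definition clus :: "cnode event \<Rightarrow> cnode set" where
  "clus v = fst (snd v) \<union> snd (snd v)"
definition TT :: "cnode event list \<Rightarrow> nat" where
  "TT es = length (filter Ainv es)"

definition BI :: "cnode set \<Rightarrow> cnode \<Rightarrow> cnode \<Rightarrow> cnode event list \<Rightarrow> cnode set set \<Rightarrow> bool" where
  "BI C x y es L2 = (L2 = {insert x (insert y C)} \<and> (\<forall>v\<in>set es. clus v \<subseteq> insert x (insert y C))
     \<and> distinct (map clus (filter Ainv es)) \<and> (\<forall>v\<in>set (filter Ainv es). x \<in> clus v \<or> y \<in> clus v))"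

definition Psz :: "cnode set \<Rightarrow> cnode \<Rightarrow> cnode \<Rightarrow> cnode event list \<Rightarrow> cnode set set \<Rightarrow> bool \<times> nat \<times> bool" where
  "Psz C x y es L2 = (card L2 = 1, TT es, card L2 = 1 \<longrightarrow> BI C x y es L2)"

definition blk :: "'l \<Rightarrow> 'l \<Rightarrow> real \<Rightarrow> real \<Rightarrow> 'l set set \<Rightarrow> 'l \<Rightarrow> ('l event list \<times> 'l set set \<times> 'l set set) pmf" where
  "blk p q t1 t2 L y = bind_pmf (branch p t1 L) (\<lambda>(f1,L1).
      map_pmf (\<lambda>(f2,L2). (f1 @ f2, L1, L2)) (branch q t2 (insert {y} L1)))"

definition beta3 :: "real \<Rightarrow> real \<Rightarrow> (bool \<times> nat \<times> bool) pmf" where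
  "beta3 t1 t2 = bind_pmf (coal_count 2 t1) (\<lambda>m1. if m1 = 0 then
      bind_pmf (coal_count 3 t2) (\<lambda>m2. if m2 = 0 then return_pmf (False, 0, True)
        else if m2 = 1 then map_pmf (\<lambda>(i,j). (False, if i = 0 \<or> j = 0 then 1 else 0, True)) P3
        else map_pmf (\<lambda>(i,j). (True, if i = 0 \<or> j = 0 then 2 else 1, True)) P3)
    else bind_pmf (coal_count 2 t2) (\<lambda>m2. if m2 = 0 then return_pmf (False, 1, True) else return_pmf (True, 2, True)))"

lemma two_const:
  assumes "P \<noteq> Q" "\<And>a b. (a,b) \<in> {(P,Q),(Q,P)} \<Longrightarrow> h ([(p, a, b)], {P\<union>Q}) = c"
  shows "map_pmf h (merge_steps p (Suc m) {P,Q}) = return_pmf c"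
proof -
  have "map_pmf h (merge_steps p (Suc m) {P,Q}) = map_pmf (\<lambda>_. c) (pmf_of_set {(P,Q),(Q,P)})"
    unfolding ms_two[OF assms(1)] map_pmf_comp
    by (rule map_pmf_cong[OF refl]) (use assms(2) in auto)
  then show ?thesis by simp
qed

locale blkhyp =
  fixes C :: "cnode set" and x y :: cnode
  assumes AC: "A \<in> C" and xC: "x \<notin> C" and yC: "y \<notin> C" and xy: "x \<noteq> y"
begin

lemma Ax: "A \<noteq> x" and Ay: "A \<noteq> y" using AC xC yC by auto

lemma Cx: "C \<noteq> {x}" and Cy: "C \<noteq> {y}" using AC Ax Ay by auto

lemma Z3_one:
  assumes "(i,j) \<in> P3set"
  shows "map_pmf (\<lambda>(es,L2). Psz C x y es L2) (map_pmf (\<lambda>(es,L'). ((Some q, sig C x y i, sig C x y j)#es, L'))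
       (merge_steps (Some q) 0 (insert (sig C x y i \<union> sig C x y j) ({C,{x},{y}} - {sig C x y i, sig C x y j}))))
     = return_pmf (False, if i = 0 \<or> j = 0 then 1 else 0, True)"
  using assms AC xC yC xy Ax Ay Cx Cy
  by (auto simp: P3set_def sig_def Psz_def TT_def Ainv_def insert_Diff_if card_insert_if)

lemma third:
  assumes "(i,j) \<in> P3set"
  shows "insert (sig C x y i \<union> sig C x y j) ({C,{x},{y}} - {sig C x y i, sig C x y j})
       = {sig C x y i \<union> sig C x y j, sig C x y (3 - i - j)}"
    and "sig C x y i \<union> sig C x y j \<noteq> sig C x y (3 - i - j)"
  using assms AC xC yC xy Ax Ay Cx Cy by (auto simp: P3set_def sig_def)

lemma P3_cases: "(i,j) \<in> P3set \<Longrightarrow> (i = 0 \<and> j = 1) \<or> (i = 0 \<and> j = 2) \<or> (i = 1 \<and> j = 0) \<or> (i = 1 \<and> j = 2) \<or> (i = 2 \<and> j = 0) \<or> (i = 2 \<and> j = 1)"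
  by (auto simp: P3set_def)

lemma Z3_two:
  assumes "(i,j) \<in> P3set"
  shows "map_pmf (\<lambda>(es,L2). Psz C x y es L2) (map_pmf (\<lambda>(es,L'). ((Some q, sig C x y i, sig C x y j)#es, L'))
       (merge_steps (Some q) (Suc m) (insert (sig C x y i \<union> sig C x y j) ({C,{x},{y}} - {sig C x y i, sig C x y j}))))
     = return_pmf (True, if i = 0 \<or> j = 0 then 2 else 1, True)"
  unfolding third(1)[OF assms] map_pmf_comp
  apply (rule two_const[OF third(2)[OF assms]])
  using P3_cases[OF assms] AC xC yC xy Ax Ay Cx Cy
  apply (elim disjE conjE)
       apply (simp_all add: sig_def Psz_def TT_def Ainv_def)
  apply (elim disjE conjE; simp only:)
  apply safe
  apply (simp_all add: BI_def clus_def Ainv_def insert_commute)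
  apply (auto simp: set_eq_iff)
  done

lemma Z3:
  "map_pmf (\<lambda>(es,L2). Psz C x y es L2) (branch q t2 {C,{x},{y}}) =
   bind_pmf (coal_count 3 t2) (\<lambda>m2. if m2 = 0 then return_pmf (False, 0, True)
        else if m2 = 1 then map_pmf (\<lambda>(i,j). (False, if i = 0 \<or> j = 0 then 1 else 0, True)) P3
        else map_pmf (\<lambda>(i,j). (True, if i = 0 \<or> j = 0 then 2 else 1, True)) P3)"
proof -
  have c3: "card {C,{x},{y}} = 3" using Cx Cy xy by auto
  show ?thesis
    unfolding branch_def c3 map_bind_pmf
  proof (rule bind_pmf_cong[OF refl])
    fix m2 :: nat
    show "map_pmf (\<lambda>(es,L2). Psz C x y es L2) (merge_steps (Some q) m2 {C,{x},{y}}) =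
      (if m2 = 0 then return_pmf (False, 0, True)
        else if m2 = 1 then map_pmf (\<lambda>(i,j). (False, if i = 0 \<or> j = 0 then 1 else 0, True)) P3
        else map_pmf (\<lambda>(i,j). (True, if i = 0 \<or> j = 0 then 2 else 1, True)) P3)"
    proof (cases m2)
      case 0
      then show ?thesis using c3 by (simp add: Psz_def TT_def)
    next
      case (Suc m')
      have e: "map_pmf (\<lambda>(es,L2). Psz C x y es L2) (merge_steps (Some q) m2 {C,{x},{y}}) =
        bind_pmf P3 (\<lambda>(i,j). map_pmf (\<lambda>(es,L2). Psz C x y es L2) (map_pmf (\<lambda>(es,L'). ((Some q, sig C x y i, sig C x y j)#es, L'))
       (merge_steps (Some q) m' (insert (sig C x y i \<union> sig C x y j) ({C,{x},{y}} - {sig C x y i, sig C x y j})))))"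
        unfolding Suc ms3[OF Cx Cy xy] map_bind_pmf by (rule bind_pmf_cong) auto
      show ?thesis
      proof (cases m')
        case 0
        have "bind_pmf P3 (\<lambda>(i,j). map_pmf (\<lambda>(es,L2). Psz C x y es L2) (map_pmf (\<lambda>(es,L'). ((Some q, sig C x y i, sig C x y j)#es, L'))
       (merge_steps (Some q) m' (insert (sig C x y i \<union> sig C x y j) ({C,{x},{y}} - {sig C x y i, sig C x y j})))))
          = bind_pmf P3 (\<lambda>ij. return_pmf ((\<lambda>(i,j). (False, if i = 0 \<or> j = 0 then 1 else 0, True)) ij))"
          unfolding 0 by (rule bind_pmf_cong[OF refl]) (auto simp del: merge_steps.simps simp: Z3_one)
        then show ?thesis using e Suc 0 by (simp add: map_pmf_def)
      next
        case (Suc m'')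
        have "bind_pmf P3 (\<lambda>(i,j). map_pmf (\<lambda>(es,L2). Psz C x y es L2) (map_pmf (\<lambda>(es,L'). ((Some q, sig C x y i, sig C x y j)#es, L'))
       (merge_steps (Some q) m' (insert (sig C x y i \<union> sig C x y j) ({C,{x},{y}} - {sig C x y i, sig C x y j})))))
          = bind_pmf P3 (\<lambda>ij. return_pmf ((\<lambda>(i,j). (True, if i = 0 \<or> j = 0 then 2 else 1, True)) ij))"
          unfolding Suc by (rule bind_pmf_cong[OF refl]) (auto simp del: merge_steps.simps simp: Z3_two)
        then show ?thesis using e \<open>m2 = Suc m'\<close> Suc by (simp add: map_pmf_def)
      qed
    qed
  qed
qed

lemma Z2:
  assumes ab: "(a,b) \<in> {(C,{x}),({x},C)}"
  shows "map_pmf (\<lambda>(f2,L2). Psz C x y ((Some p,a,b)#f2) L2) (branch q t2 (insert {y} {C \<union> {x}})) =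
    bind_pmf (coal_count 2 t2) (\<lambda>m2. if m2 = 0 then return_pmf (False, 1, True) else return_pmf (True, 2, True))"
proof -
  have ne: "{y} \<noteq> C \<union> {x}" using AC Ay by auto
  have c2: "card (insert {y} {C \<union> {x}}) = 2" using ne by auto
  show ?thesis
    unfolding branch_def c2 map_bind_pmf
  proof (rule bind_pmf_cong[OF refl])
    fix m2 :: nat
    show "map_pmf (\<lambda>(f2,L2). Psz C x y ((Some p,a,b)#f2) L2) (merge_steps (Some q) m2 (insert {y} {C \<union> {x}})) =
      (if m2 = 0 then return_pmf (False, 1, True) else return_pmf (True, 2, True))"
    proof (cases m2)
      case 0
      then show ?thesis using c2 ab AC by (auto simp: Psz_def TT_def Ainv_def)
    next
      case (Suc m')
      show ?thesis unfolding Suc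
        apply (simp only: nat.distinct if_False)
        apply (rule two_const[OF ne])
        using ab AC xC yC xy Ax Ay
        apply (auto simp: Psz_def TT_def Ainv_def BI_def clus_def)
        done
    qed
  qed
qed

lemma blk_beta:
  "map_pmf (\<lambda>(es,L1,L2). Psz C x y es L2) (blk p q t1 t2 {C,{x}} y) = beta3 t1 t2"
proof -
  have c2: "card {C,{x}} = 2" using Cx by auto
  show ?thesis
    unfolding blk_def branch_def[of p] c2 bind_assoc_pmf beta3_def
    apply (subst map_bind_pmf)
  proof (rule bind_pmf_cong[OF refl])
    fix m1 :: nat
    show "map_pmf (\<lambda>(es,L1,L2). Psz C x y es L2) (bind_pmf (merge_steps (Some p) m1 {C, {x}}) (\<lambda>(f1, L1).
             map_pmf (\<lambda>(f2, L2). (f1 @ f2, L1, L2)) (branch q t2 (insert {y} L1)))) = (if m1 = 0 then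
      bind_pmf (coal_count 3 t2) (\<lambda>m2. if m2 = 0 then return_pmf (False, 0, True)
        else if m2 = 1 then map_pmf (\<lambda>(i,j). (False, if i = 0 \<or> j = 0 then 1 else 0, True)) P3
        else map_pmf (\<lambda>(i,j). (True, if i = 0 \<or> j = 0 then 2 else 1, True)) P3)
    else bind_pmf (coal_count 2 t2) (\<lambda>m2. if m2 = 0 then return_pmf (False, 1, True) else return_pmf (True, 2, True)))"
    proof (cases m1)
      case 0
      have "insert {y} {C, {x}} = {C,{x},{y}}" by auto
      then show ?thesis using 0
        apply (simp add: bind_return_pmf map_pmf_comp)
        apply (subst Z3[symmetric])
        apply (rule map_pmf_cong)
         apply auto
        done
    next
      case (Suc m)
      have "map_pmf (\<lambda>(es,L1,L2). Psz C x y es L2) (bind_pmf (merge_steps (Some p) m1 {C, {x}}) (\<lambda>(f1, L1).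
             map_pmf (\<lambda>(f2, L2). (f1 @ f2, L1, L2)) (branch q t2 (insert {y} L1))))
          = bind_pmf (pmf_of_set {(C,{x}),({x},C)}) (\<lambda>ab. bind_pmf (coal_count 2 t2) (\<lambda>m2. if m2 = 0 then return_pmf (False, 1, True) else return_pmf (True, 2, True)))"
        unfolding Suc ms_two[OF Cx] map_bind_pmf bind_map_pmf
        apply (rule bind_pmf_cong[OF refl])
        subgoal for ab
          apply (cases ab)
          apply (simp only: set_pmf_of_set[OF insert_not_empty finite.insertI[OF finite.insertI[OF finite.emptyI]]])
          apply (simp only: prod.case)
          apply (subst Z2[symmetric], assumption)
          apply (simp only: map_pmf_comp)
          apply (rule map_pmf_cong)
           apply auto
          done
        done
      then show ?thesis using Suc by simp
    qed
  qed
qed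

end

lemma branch_single: "branch p t {S} = return_pmf ([], {S})"
  unfolding branch_def by (simp add: ms_small)

definition wtB :: "real \<Rightarrow> real \<Rightarrow> nat \<Rightarrow> cnode \<Rightarrow> cnode stree" where
  "wtB f g j b = Nd (W (j+2)) (Nd (Z (j+1)) (wt f g j) f (Lf (Y (j+1))) g) g (Lf b) g"

lemma label_wt[simp]: "label (wt f g j) = W (j+1)"
  by (cases j) auto

lemma wt_Suc: "wt f g (Suc j) = wtB f g j (X (j+2))"
  by (simp add: wtB_def)

definition xupd where
  "xupd j b x L1 L2 = x(W (j+1) := L1, Y (j+1) := {{Y (j+1)}}, Z (j+1) := L2, b := {{b}})"

lemma sim_wtB:
  "sim (wtB f g j b) = bind_pmf (sim (wt f g j)) (\<lambda>(e,x,L).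
     map_pmf (\<lambda>(es,L1,L2). (e @ es, xupd j b x L1 L2, insert {b} L2)) (blk (W (j+1)) (Z (j+1)) f g L (Y (j+1))))"
  apply (simp add: wtB_def blk_def branch_single bind_return_pmf bind_assoc_pmf map_bind_pmf bind_map_pmf split_beta map_pmf_def xupd_def)
  apply (intro bind_pmf_cong refl)
  apply (auto simp: case_prod_unfold)
  done

lemma ms_pops: "(es, L') \<in> set_pmf (merge_steps p m L) \<Longrightarrow> \<forall>v\<in>set es. fst v = p"
proof (induction m arbitrary: L es L')
  case 0 then show ?case by simp
next
  case (Suc m)
  show ?case
  proof (cases "card L < 2")
    case True then show ?thesis using Suc.prems by simp
  next
    case False
    then show ?thesis using Suc.prems Suc.IH by (fastforce simp: ms_suc)
  qed
qed

lemma branch_pops: "(es, L') \<in> set_pmf (branch p t L) \<Longrightarrow> \<forall>v\<in>set es. fst v = Some p"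
  unfolding branch_def using ms_pops by fastforce

lemma blk_pops: "(es, L1, L2) \<in> set_pmf (blk p q t1 t2 L y) \<Longrightarrow> \<forall>v\<in>set es. fst v = Some p \<or> fst v = Some q"
  unfolding blk_def using branch_pops by fastforce

definition S :: "nat \<Rightarrow> cnode set" where
  "S j = insert A (X ` {1..j} \<union> Y ` {1..j})"

lemma S_Suc: "S (Suc j) = insert (X (Suc j)) (insert (Y (Suc j)) (S j))"
  by (auto simp: S_def)

lemma S_facts: "A \<in> S j" "X (Suc j) \<notin> S j" "Y (Suc j) \<notin> S j" "B \<notin> S j" "X (Suc (Suc j)) \<notin> S (Suc j)"
  by (auto simp: S_def)

lemma S_mono: "S j \<subseteq> S (Suc j)" by (auto simp: S_Suc)

definition Gj :: "nat \<Rightarrow> (cnode \<Rightarrow> cnode set set) \<Rightarrow> bool" where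
  "Gj j x = (\<forall>i\<in>{1..j}. card (x (Z i)) = 1)"

definition InvW :: "nat \<Rightarrow> cnode \<Rightarrow> cnode event list \<times> (cnode \<Rightarrow> cnode set set) \<times> cnode set set \<Rightarrow> bool" where
  "InvW j b \<omega> = (Gj j (fst (snd \<omega>)) \<longrightarrow> (snd (snd \<omega>) = {S j, {b}} \<and> (\<forall>v\<in>set (fst \<omega>). clus v \<subseteq> S j)
      \<and> distinct (map clus (filter Ainv (fst \<omega>))) \<and> {A} \<notin> clus ` set (filter Ainv (fst \<omega>))))"

definition Psi :: "nat \<Rightarrow> cnode event list \<times> (cnode \<Rightarrow> cnode set set) \<times> cnode set set \<Rightarrow> bool \<times> nat \<times> bool \<times> nat" where
  "Psi j \<omega> = (Gj j (fst (snd \<omega>)), if Gj j (fst (snd \<omega>)) then TT (fst \<omega>) else 0,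
      card (fst (snd \<omega>) (Z 1)) = 1, Xcnt 1 (fst \<omega>, fst (snd \<omega>)))"

definition beta :: "real \<Rightarrow> real \<Rightarrow> (bool \<times> nat) pmf" where
  "beta t1 t2 = map_pmf (\<lambda>(b,c,_). (b,c)) (beta3 t1 t2)"

definition step :: "real \<Rightarrow> real \<Rightarrow> nat \<Rightarrow> bool \<times> nat \<times> bool \<times> nat \<Rightarrow> (bool \<times> nat \<times> bool \<times> nat) pmf" where
  "step t1 t2 j s = (case s of (g,t,c,y) \<Rightarrow> if g then map_pmf (\<lambda>(b',x'). (b', if b' then t + x' else 0,
       if j = 0 then b' else c, if j = 0 then x' else y)) (beta t1 t2) else return_pmf (False, 0, c, y))"

primrec DD :: "real \<Rightarrow> real \<Rightarrow> nat \<Rightarrow> (bool \<times> nat \<times> bool \<times> nat) pmf" where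
  "DD t1 t2 0 = return_pmf (True, 0, False, 0)"
| "DD t1 t2 (Suc j) = bind_pmf (DD t1 t2 j) (step t1 t2 j)"

lemma set_beta3: "set_pmf (beta3 t1 t2) \<subseteq> {(b,c,True) | b c. c \<le> 2}"
  unfolding beta3_def by (auto simp: P3set_def split: if_splits)

lemma gx:
  assumes "\<forall>i. b \<noteq> Z i"
  shows "Gj (Suc j) (xupd j b x L1 L2) = (Gj j x \<and> card L2 = 1)"
  using assms unfolding Gj_def xupd_def by (auto simp: le_Suc_eq)

lemma Xcnt_app: "Xcnt i (e @ es, x) = Xcnt i (e, x') + Xcnt i (es, x'')"
  by (simp add: Xcnt_def)

lemma Xcnt_zero: "\<forall>v\<in>set es. fst v \<noteq> Some (W i) \<and> fst v \<noteq> Some (Z i) \<Longrightarrow> Xcnt i (es, x) = 0"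
  unfolding Xcnt_def by (auto simp: filter_empty_conv split_beta)

lemma Xcnt_TT: "\<forall>v\<in>set es. fst v = Some (W i) \<or> fst v = Some (Z i) \<Longrightarrow> Xcnt i (es, x) = TT es"
  unfolding Xcnt_def TT_def Ainv_def
  by (rule arg_cong[where f=length], rule filter_cong) (auto simp: split_beta)

lemma TT_app: "TT (e @ es) = TT e + TT es" by (simp add: TT_def)

lemma sim_wt0: "sim (wt f g 0) = return_pmf ([], (\<lambda>w. {} \<union> {})(A := {{A}}, X 1 := {{X 1}}), {{A}} \<union> {{X 1}})"
  by (simp add: branch_single bind_return_pmf)

lemma base_facts:
  shows "\<forall>\<omega>\<in>set_pmf (sim (wt f g 0)). InvW 0 (X (Suc 0)) \<omega>"
    and "map_pmf (Psi 0) (sim (wt f g 0)) = DD f g 0"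
    and "\<forall>\<omega>\<in>set_pmf (sim (wt f g 0)). fst \<omega> = []"
proof -
  have s0: "S 0 = {A}" by (simp add: S_def)
  show "\<forall>\<omega>\<in>set_pmf (sim (wt f g 0)). InvW 0 (X (Suc 0)) \<omega>"
    unfolding sim_wt0 by (simp add: InvW_def s0 insert_commute)
  show "map_pmf (Psi 0) (sim (wt f g 0)) = DD f g 0"
    unfolding sim_wt0 by (simp add: Psi_def Gj_def TT_def Xcnt_def)
  show "\<forall>\<omega>\<in>set_pmf (sim (wt f g 0)). fst \<omega> = []"
    unfolding sim_wt0 by simp
qed

lemma blk_BI:
  assumes "A \<in> C" "x \<notin> C" "y \<notin> C" "x \<noteq> y"
    and "(es, L1, L2) \<in> set_pmf (blk p q t1 t2 {C,{x}} y)"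
  shows "card L2 = 1 \<Longrightarrow> BI C x y es L2"
proof -
  interpret blkhyp C x y using assms(1-4) by unfold_locales
  have "Psz C x y es L2 \<in> set_pmf (beta3 t1 t2)"
    using assms(5) blk_beta[of p q t1 t2, symmetric] by (force simp: set_map_pmf)
  then show "card L2 = 1 \<Longrightarrow> BI C x y es L2" using set_beta3 by (auto simp: Psz_def)
qed

lemma step_inv:
  assumes bZ: "\<forall>i. b \<noteq> Z i"
  and I: "\<forall>\<omega>\<in>set_pmf (sim (wt f g j)). InvW j (X (Suc j)) \<omega>"
  shows "\<forall>\<omega>\<in>set_pmf (sim (wtB f g j b)). InvW (Suc j) b \<omega>"
proof
  fix \<omega> assume "\<omega> \<in> set_pmf (sim (wtB f g j b))"
  then obtain e x L es L1 L2 where eL: "(e,x,L) \<in> set_pmf (sim (wt f g j))"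
     and bl: "(es,L1,L2) \<in> set_pmf (blk (W (j+1)) (Z (j+1)) f g L (Y (j+1)))"
     and om: "\<omega> = (e @ es, xupd j b x L1 L2, insert {b} L2)"
    unfolding sim_wtB by auto
  show "InvW (Suc j) b \<omega>"
    unfolding InvW_def
  proof
    assume "Gj (Suc j) (fst (snd \<omega>))"
    then have G: "Gj j x" and c1: "card L2 = 1" using gx[OF bZ] om by auto
    from I eL G have L: "L = {S j, {X (Suc j)}}" and old: "\<forall>v\<in>set e. clus v \<subseteq> S j"
      and dold: "distinct (map clus (filter Ainv e))" and Aold: "{A} \<notin> clus ` set (filter Ainv e)"
      unfolding InvW_def by auto
    have bl': "(es,L1,L2) \<in> set_pmf (blk (W (j+1)) (Z (j+1)) f g {S j, {X (Suc j)}} (Y (Suc j)))"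
      using bl L by simp
    have "BI (S j) (X (Suc j)) (Y (Suc j)) es L2"
      by (rule blk_BI[OF S_facts(1,2,3) _ bl' c1]) simp
    then have L2: "L2 = {S (Suc j)}" and new: "\<forall>v\<in>set es. clus v \<subseteq> S (Suc j)"
      and dnew: "distinct (map clus (filter Ainv es))"
      and xy: "\<forall>v\<in>set (filter Ainv es). X (Suc j) \<in> clus v \<or> Y (Suc j) \<in> clus v"
      unfolding BI_def S_Suc by auto
    have disj: "set (map clus (filter Ainv e)) \<inter> set (map clus (filter Ainv es)) = {}"
      using old xy S_facts(2,3)[of j] by fastforce
    have "\<forall>v\<in>set (e @ es). clus v \<subseteq> S (Suc j)" using old new S_mono[of j] by fastforce
    moreover have "distinct (map clus (filter Ainv (e @ es)))" using dold dnew disj by simp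
    moreover have "{A} \<notin> clus ` set (filter Ainv (e @ es))"
    proof
      assume "{A} \<in> clus ` set (filter Ainv (e @ es))"
      then obtain v where v: "v \<in> set (filter Ainv (e @ es))" "clus v = {A}" by auto
      show False
      proof (cases "v \<in> set e")
        case True then show False using v Aold by auto
      next
        case False then have "v \<in> set (filter Ainv es)" using v by auto
        then have "X (Suc j) \<in> clus v \<or> Y (Suc j) \<in> clus v" using xy by blast
        then show False using v by auto
      qed
    qed
    moreover have "insert {b} L2 = {S (Suc j), {b}}" using L2 by auto
    ultimately show "snd (snd \<omega>) = {S (Suc j), {b}} \<and> (\<forall>v\<in>set (fst \<omega>). clus v \<subseteq> S (Suc j)) \<and>
        distinct (map clus (filter Ainv (fst \<omega>))) \<and> {A} \<notin> clus ` set (filter Ainv (fst \<omega>))"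
      using om by simp
  qed
qed

lemma step_law:
  assumes bZ: "\<forall>i. b \<noteq> Z i"
  and I: "\<forall>\<omega>\<in>set_pmf (sim (wt f g j)). InvW j (X (Suc j)) \<omega>"
  and D: "map_pmf (Psi j) (sim (wt f g j)) = DD f g j"
  and e0: "j = 0 \<Longrightarrow> \<forall>\<omega>\<in>set_pmf (sim (wt f g j)). fst \<omega> = []"
  shows "map_pmf (Psi (Suc j)) (sim (wtB f g j b)) = DD f g (Suc j)"
proof -
  have "map_pmf (Psi (Suc j)) (sim (wtB f g j b)) = bind_pmf (sim (wt f g j)) (\<lambda>\<omega>. step f g j (Psi j \<omega>))"
    unfolding sim_wtB map_bind_pmf
  proof (rule bind_pmf_cong[OF refl])
    fix \<omega> assume om: "\<omega> \<in> set_pmf (sim (wt f g j))"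
    obtain e x L where o: "\<omega> = (e,x,L)" by (cases \<omega>) auto
    have Z1: "j \<noteq> 0 \<Longrightarrow> xupd j b x L1 L2 (Z 1) = x (Z 1)" for L1 L2
      using bZ[rule_format, of 1] by (simp add: xupd_def)
    have Z1': "xupd 0 b x L1 L2 (Z 1) = L2" for L1 L2
      using bZ[rule_format, of 1] by (simp add: xupd_def)
    have pops: "\<forall>v\<in>set es. fst v = Some (W (Suc j)) \<or> fst v = Some (Z (Suc j))"
      if "(es, L1, L2) \<in> set_pmf (blk (W (j+1)) (Z (j+1)) f g L (Y (j+1)))" for es L1 L2
      using blk_pops[OF that] by simp
    have Xc: "Xcnt 1 (e @ es, xupd j b x L1 L2) = (if j = 0 then TT es else Xcnt 1 (e, x))"
      if "(es, L1, L2) \<in> set_pmf (blk (W (j+1)) (Z (j+1)) f g L (Y (j+1)))" for es L1 L2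
    proof (cases "j = 0")
      case True
      have "fst \<omega> = []" using e0[OF True] om by blast
      then have "e = []" using o by simp
      then show ?thesis using True Xcnt_TT[of es 1] pops[OF that] by simp
    next
      case False
      then have "Xcnt 1 (es, x) = 0" using pops[OF that] by (intro Xcnt_zero) auto
      then show ?thesis using False Xcnt_app[of 1 e es _ x x] by simp
    qed
    show "map_pmf (Psi (Suc j)) ((\<lambda>(e, x, L). map_pmf (\<lambda>(es, L1, L2). (e @ es, xupd j b x L1 L2, insert {b} L2))
               (blk (W (j + 1)) (Z (j + 1)) f g L (Y (j + 1)))) \<omega>) = step f g j (Psi j \<omega>)"
    proof (cases "Gj j x")
      case True
      then have L: "L = {S j, {X (Suc j)}}" using I om o unfolding InvW_def by auto
      interpret blkhyp "S j" "X (Suc j)" "Y (Suc j)" using S_facts by unfold_locales auto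
      have "step f g j (Psi j \<omega>) = map_pmf (\<lambda>(b',x'). (b', if b' then TT e + x' else 0,
          if j = 0 then b' else card (x (Z 1)) = 1, if j = 0 then x' else Xcnt 1 (e,x))) (beta f g)"
        using True o by (simp add: step_def Psi_def del: One_nat_def)
      also have "\<dots> = map_pmf (\<lambda>(b',x',_). (b', if b' then TT e + x' else 0,
          if j = 0 then b' else card (x (Z 1)) = 1, if j = 0 then x' else Xcnt 1 (e,x)))
          (map_pmf (\<lambda>(es,L1,L2). Psz (S j) (X (Suc j)) (Y (Suc j)) es L2) (blk (W (j+1)) (Z (j+1)) f g L (Y (j+1))))"
        unfolding L beta_def by (simp add: blk_beta map_pmf_comp) (rule map_pmf_cong, auto)
      also have "\<dots> = map_pmf (Psi (Suc j)) ((\<lambda>(e, x, L). map_pmf (\<lambda>(es, L1, L2). (e @ es, xupd j b x L1 L2, insert {b} L2))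
               (blk (W (j + 1)) (Z (j + 1)) f g L (Y (j + 1)))) \<omega>)"
        unfolding o map_pmf_comp prod.case
      proof (rule map_pmf_cong[OF refl])
        fix t assume t: "t \<in> set_pmf (blk (W (j + 1)) (Z (j + 1)) f g L (Y (j + 1)))"
        obtain es L1 L2 where tt: "t = (es,L1,L2)" by (cases t) auto
        show "(\<lambda>(b', x', _). (b', if b' then TT e + x' else 0, if j = 0 then b' else card (x (Z 1)) = 1, if j = 0 then x' else Xcnt 1 (e, x)))
           ((\<lambda>(es, L1, L2). Psz (S j) (X (Suc j)) (Y (Suc j)) es L2) t) =
          Psi (Suc j) ((\<lambda>(es, L1, L2). (e @ es, xupd j b x L1 L2, insert {b} L2)) t)"
          using t tt True gx[OF bZ, of j x] Xc[of es L1 L2] Z1 Z1'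
          by (cases "j = 0") (auto simp: Psi_def Psz_def TT_app)
      qed
      finally show ?thesis by simp
    next
      case False
      then have j0: "j \<noteq> 0" by (auto simp: Gj_def)
      have "step f g j (Psi j \<omega>) = return_pmf (False, 0, card (x (Z 1)) = 1, Xcnt 1 (e,x))"
        using False o by (simp add: step_def Psi_def del: One_nat_def)
      also have "\<dots> = map_pmf (\<lambda>_. (False, 0, card (x (Z 1)) = 1, Xcnt 1 (e,x))) (blk (W (j + 1)) (Z (j + 1)) f g L (Y (j + 1)))"
        by simp
      also have "\<dots> = map_pmf (Psi (Suc j)) ((\<lambda>(e, x, L). map_pmf (\<lambda>(es, L1, L2). (e @ es, xupd j b x L1 L2, insert {b} L2))
               (blk (W (j + 1)) (Z (j + 1)) f g L (Y (j + 1)))) \<omega>)"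
        unfolding o map_pmf_comp prod.case
      proof (rule map_pmf_cong[OF refl])
        fix t assume t: "t \<in> set_pmf (blk (W (j + 1)) (Z (j + 1)) f g L (Y (j + 1)))"
        obtain es L1 L2 where tt: "t = (es,L1,L2)" by (cases t) auto
        show "(False, 0, card (x (Z 1)) = 1, Xcnt 1 (e, x)) =
          Psi (Suc j) ((\<lambda>(es, L1, L2). (e @ es, xupd j b x L1 L2, insert {b} L2)) t)"
          using t tt False gx[OF bZ, of j x] Xc[of es L1 L2] Z1[OF j0] j0
          by (auto simp: Psi_def)
      qed
      finally show ?thesis by simp
    qed
  qed
  also have "\<dots> = bind_pmf (map_pmf (Psi j) (sim (wt f g j))) (step f g j)"
    by (simp add: bind_map_pmf)
  also have "\<dots> = DD f g (Suc j)" using D by simp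
  finally show ?thesis .
qed

lemma wt_facts:
  "(\<forall>\<omega>\<in>set_pmf (sim (wt f g j)). InvW j (X (Suc j)) \<omega>) \<and> map_pmf (Psi j) (sim (wt f g j)) = DD f g j"
proof (induction j)
  case 0 then show ?case using base_facts by blast
next
  case (Suc j)
  have bZ: "\<forall>i. X (j+2) \<noteq> Z i" by simp
  have e0: "j = 0 \<Longrightarrow> \<forall>\<omega>\<in>set_pmf (sim (wt f g j)). fst \<omega> = []" using base_facts by blast
  show ?case unfolding wt_Suc
    using step_inv[OF bZ, of f g] step_law[OF bZ _ _ e0] Suc.IH by simp
qed

lemma leaves_wt: "leaves (wt f g j) = insert (X (Suc j)) (S j)"
proof (induction j)
  case 0 then show ?case by (auto simp: S_def)
next
  case (Suc j) then show ?case by (auto simp: S_Suc)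
qed

lemma leaves_wtB: "leaves (wtB f g j b) = insert b (S (Suc j))"
  by (auto simp: wtB_def leaves_wt S_Suc)

lemma dab_calc:
  assumes old: "\<forall>v\<in>set e. clus v \<subseteq> Sk" and d: "distinct (map clus (filter Ainv e))"
    and nA: "{A} \<notin> clus ` set (filter Ainv e)" and AS: "A \<in> Sk" and BS: "B \<notin> Sk"
    and top: "a \<union> b = insert B Sk" "A \<in> a \<or> A \<in> b"
  shows "gt_dist (insert B Sk) (e @ [(None, a, b)]) A B = 1 + TT e"
proof -
  have cl: "gt_clusters Lv evs = (\<lambda>x. {x}) ` Lv \<union> clus ` set evs" for Lv evs
    unfolding gt_clusters_def clus_def by (auto simp: image_iff split_beta)
  let ?K = "gt_clusters (insert B Sk) (e @ [(None, a, b)])"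
  have ABne: "A \<noteq> B" using AS BS by auto
  have s1: "{C \<in> ?K. A \<in> C \<and> B \<notin> C} = insert {A} (clus ` set (filter Ainv e))"
  proof -
    have "{C \<in> ?K. A \<in> C \<and> B \<notin> C} \<subseteq> insert {A} (clus ` set (filter Ainv e))"
      using top by (auto simp: cl clus_def Ainv_def)
    moreover have "insert {A} (clus ` set (filter Ainv e)) \<subseteq> {C \<in> ?K. A \<in> C \<and> B \<notin> C}"
      using old BS ABne AS by (auto simp: cl clus_def Ainv_def)
    ultimately show ?thesis by blast
  qed
  have s2: "{C \<in> ?K. B \<in> C \<and> A \<notin> C} = {{B}}"
  proof -
    have "{C \<in> ?K. B \<in> C \<and> A \<notin> C} \<subseteq> {{B}}"
      using top old BS AS by (auto simp: cl clus_def)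
    moreover have "{B} \<in> ?K" by (auto simp: cl)
    ultimately show ?thesis using ABne by auto
  qed
  have s3: "\<forall>C\<in>?K. A \<in> C \<and> B \<in> C \<longrightarrow> C = insert B Sk"
    using top old BS ABne by (auto simp: cl clus_def)
  have "card (insert {A} (clus ` set (filter Ainv e))) = 1 + TT e"
    using nA distinct_card[OF d] by (simp add: TT_def)
  then show ?thesis unfolding gt_dist_def s1 s2 using s3 by simp
qed

definition hfin :: "bool \<times> nat \<times> bool \<times> nat \<Rightarrow> bool \<times> nat \<times> bool \<times> nat" where
  "hfin s = (case s of (g,t,c,y) \<Rightarrow> (g, if g then 1 + t else 0, c, y))"

definition Phi :: "nat \<Rightarrow> cnode event list \<times> (cnode \<Rightarrow> cnode set set) \<Rightarrow> bool \<times> nat \<times> bool \<times> nat" where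
  "Phi k \<omega> = (Gj k (snd \<omega>), if Gj k (snd \<omega>) then gt_dist (insert B (S k)) (fst \<omega>) A B else 0,
     card (snd \<omega> (Z 1)) = 1, Xcnt 1 \<omega>)"

lemma msc_law:
  "map_pmf (Phi (Suc j)) (msc (wtB f g j B)) = map_pmf hfin (DD f g (Suc j))"
proof -
  have bZ: "\<forall>i. B \<noteq> Z i" by simp
  have e0: "j = 0 \<Longrightarrow> \<forall>\<omega>\<in>set_pmf (sim (wt f g j)). fst \<omega> = []" using base_facts by blast
  have I: "\<forall>\<omega>\<in>set_pmf (sim (wtB f g j B)). InvW (Suc j) B \<omega>"
    using step_inv[OF bZ] wt_facts by blast
  have D: "map_pmf (Psi (Suc j)) (sim (wtB f g j B)) = DD f g (Suc j)"
    using step_law[OF bZ _ _ e0] wt_facts by blast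
  have "map_pmf (Phi (Suc j)) (msc (wtB f g j B)) = bind_pmf (sim (wtB f g j B)) (\<lambda>\<omega>. return_pmf (hfin (Psi (Suc j) \<omega>)))"
    unfolding msc_def map_bind_pmf
  proof (rule bind_pmf_cong[OF refl])
    fix \<omega> assume om: "\<omega> \<in> set_pmf (sim (wtB f g j B))"
    obtain e x L where o: "\<omega> = (e,x,L)" by (cases \<omega>) auto
    have "map_pmf (Phi (Suc j)) (map_pmf (\<lambda>(f', L'). (e @ f', x)) (merge_steps None (card L - 1) L))
          = map_pmf (\<lambda>_. hfin (Psi (Suc j) \<omega>)) (merge_steps None (card L - 1) L)"
      unfolding map_pmf_comp
    proof (rule map_pmf_cong[OF refl])
      fix t assume t: "t \<in> set_pmf (merge_steps None (card L - 1) L)"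
      obtain f' L' where tt: "t = (f', L')" by (cases t) auto
      have Xc: "Xcnt 1 (e @ f', x) = Xcnt 1 (e, x)"
        using ms_pops[OF t[unfolded tt]] Xcnt_app[of 1 e f' x x x] Xcnt_zero[of f' 1 x] by auto
      show "Phi (Suc j) ((\<lambda>(f', L'). (e @ f', x)) t) = hfin (Psi (Suc j) \<omega>)"
      proof (cases "Gj (Suc j) x")
        case False
        then show ?thesis using tt o Xc by (simp add: Phi_def hfin_def Psi_def)
      next
        case True
        then have L: "L = {S (Suc j), {B}}" and old: "\<forall>v\<in>set e. clus v \<subseteq> S (Suc j)"
          and dd: "distinct (map clus (filter Ainv e))" and nA: "{A} \<notin> clus ` set (filter Ainv e)"
          using I om o unfolding InvW_def by auto
        have ne: "S (Suc j) \<noteq> {B}" using S_facts(1)[of "Suc j"] by auto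
        then have c2: "card L - 1 = Suc 0" using L by simp
        have "t \<in> set_pmf (merge_steps None (Suc 0) {S (Suc j), {B}})" using t c2 L by simp
        then have "f' = [(None, S (Suc j), {B})] \<or> f' = [(None, {B}, S (Suc j))]"
          using tt unfolding ms_two[OF ne] by auto
        then have "gt_dist (insert B (S (Suc j))) (e @ f') A B = 1 + TT e"
          using dab_calc[OF old dd nA S_facts(1) S_facts(4), of "S (Suc j)" "{B}"]
             dab_calc[OF old dd nA S_facts(1) S_facts(4), of "{B}" "S (Suc j)"] S_facts(1)[of "Suc j"] by auto
        then show ?thesis using tt o Xc True by (simp add: Phi_def hfin_def Psi_def)
      qed
    qed
    then show "map_pmf (Phi (Suc j)) ((\<lambda>(e, x, L). map_pmf (\<lambda>(f, L'). (e @ f, x)) (merge_steps None (card L - 1) L)) \<omega>) =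
         return_pmf (hfin (Psi (Suc j) \<omega>))" using o by simp
  qed
  also have "\<dots> = map_pmf hfin (map_pmf (Psi (Suc j)) (sim (wtB f g j B)))"
    by (simp add: map_pmf_def bind_assoc_pmf bind_return_pmf)
  finally show ?thesis using D by simp
qed

primrec nlv :: "'l stree \<Rightarrow> nat" where
  "nlv (Lf x) = 1"
| "nlv (Nd v l sl r sr) = nlv l + nlv r"

lemma ms_len: "finite L \<Longrightarrow> (es, L') \<in> set_pmf (merge_steps p m L) \<Longrightarrow> finite L' \<and> length es + card L' \<le> card L"
proof (induction m arbitrary: L es L')
  case 0 then show ?case by simp
next
  case (Suc m)
  show ?case
  proof (cases "card L < 2")
    case True then show ?thesis using Suc.prems by simp
  next
    case False
    have finL: "finite L" using Suc.prems(1) .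
    have "\<exists>a\<in>L. \<exists>b\<in>L. a \<noteq> b" using False card_le_Suc0_iff_eq[OF finL] by auto
    then have pe: "set_pmf (pmf_of_set {(A, B). A \<in> L \<and> B \<in> L \<and> A \<noteq> B}) = {(A, B). A \<in> L \<and> B \<in> L \<and> A \<noteq> B}"
      by (intro set_pmf_of_set) (auto intro: finite_subset[of _ "L \<times> L"] simp: finL)
    obtain a b es' where ab: "a \<in> L" "b \<in> L" "a \<noteq> b" and es: "es = (p,a,b) # es'"
      and in2: "(es', L') \<in> set_pmf (merge_steps p m (insert (a \<union> b) (L - {a, b})))"
      using Suc.prems(2) False by (auto simp: ms_suc pe)
    have fin: "finite (insert (a \<union> b) (L - {a, b}))" using Suc.prems(1) by simp
    have "card (insert (a \<union> b) (L - {a, b})) \<le> Suc (card (L - {a,b}))" by (rule card_insert_le_m1) auto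
    also have "card (L - {a,b}) = card L - 2" using ab Suc.prems(1) by (simp add: card_Diff_subset)
    finally have "card (insert (a \<union> b) (L - {a, b})) \<le> card L - 1" using False by linarith
    then show ?thesis using Suc.IH[OF fin in2] es False by auto
  qed
qed

lemma sim_len: "(e, x, L) \<in> set_pmf (sim T) \<Longrightarrow> finite L \<and> length e + card L \<le> nlv T"
proof (induction T arbitrary: e x L)
  case (Lf y) then show ?case by simp
next
  case (Nd v l sl r sr)
  from Nd.prems obtain e1 x1 L1 e2 x2 L2 f1 L1' f2 L2' where
    s1: "(e1,x1,L1) \<in> set_pmf (sim l)" and s2: "(e2,x2,L2) \<in> set_pmf (sim r)"
    and b1: "(f1, L1') \<in> set_pmf (branch (label l) sl L1)" and b2: "(f2, L2') \<in> set_pmf (branch (label r) sr L2)"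
    and e: "e = e1 @ e2 @ f1 @ f2" and L: "L = L1' \<union> L2'"
    by (auto split: prod.splits)
  have i1: "finite L1 \<and> length e1 + card L1 \<le> nlv l" using Nd.IH(1)[OF s1] .
  have i2: "finite L2 \<and> length e2 + card L2 \<le> nlv r" using Nd.IH(2)[OF s2] .
  have j1: "finite L1' \<and> length f1 + card L1' \<le> card L1" using b1 i1 ms_len unfolding branch_def by fastforce
  have j2: "finite L2' \<and> length f2 + card L2' \<le> card L2" using b2 i2 ms_len unfolding branch_def by fastforce
  have "card L \<le> card L1' + card L2'" unfolding L by (rule card_Un_le)
  then show ?case using i1 i2 j1 j2 e L by auto
qed

lemma msc_len: "\<omega> \<in> set_pmf (msc T) \<Longrightarrow> length (fst \<omega>) \<le> nlv T"
proof -
  assume "\<omega> \<in> set_pmf (msc T)"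
  then obtain e x L f L' where s: "(e,x,L) \<in> set_pmf (sim T)" and m: "(f, L') \<in> set_pmf (merge_steps None (card L - 1) L)"
    and o: "\<omega> = (e @ f, x)"
    unfolding msc_def by auto
  have "finite L \<and> length e + card L \<le> nlv T" using sim_len[OF s] .
  moreover have "length f + card L' \<le> card L" using ms_len m calculation by blast
  ultimately show ?thesis using o by auto
qed

lemma gt_dist_le: "finite Lv \<Longrightarrow> gt_dist Lv evs a b \<le> 2 * (card Lv + length evs)"
proof -
  assume fin: "finite Lv"
  let ?K = "gt_clusters Lv evs"
  have fK: "finite ?K" using fin unfolding gt_clusters_def by simp
  have "card ?K \<le> card ((\<lambda>x. {x}) ` Lv) + card ((\<lambda>(p, c1, c2). c1 \<union> c2) ` set evs)"
    unfolding gt_clusters_def by (rule card_Un_le)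
  also have "\<dots> \<le> card Lv + length evs"
    by (intro add_mono card_image_le fin order.trans[OF card_image_le card_length]) simp
  finally have cK: "card ?K \<le> card Lv + length evs" .
  have "card {C \<in> ?K. a \<in> C \<and> b \<notin> C} \<le> card ?K" by (rule card_mono[OF fK]) auto
  moreover have "card {C \<in> ?K. b \<in> C \<and> a \<notin> C} \<le> card ?K" by (rule card_mono[OF fK]) auto
  moreover have "gt_dist Lv evs a b \<le> card {C \<in> ?K. a \<in> C \<and> b \<notin> C} + card {C \<in> ?K. b \<in> C \<and> a \<notin> C}"
    unfolding gt_dist_def by simp
  ultimately have "gt_dist Lv evs a b \<le> card ?K + card ?K" by (meson add_mono order_trans)
  then show ?thesis using cK
    by simp
qed

lemma finite_leaves: "finite (leaves T)" by (induction T) auto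

lemma E_bind_fin:
  fixes h :: "'b \<Rightarrow> real"
  assumes "finite (set_pmf p)" "\<And>s. s \<in> set_pmf p \<Longrightarrow> finite (set_pmf (K s))"
  shows "measure_pmf.expectation (bind_pmf p K) h = measure_pmf.expectation p (\<lambda>s. measure_pmf.expectation (K s) h)"
proof -
  have "measure_pmf.expectation (bind_pmf p K) h = (\<Sum>a\<in>set_pmf p. pmf p a *\<^sub>R measure_pmf.expectation (K a) h)"
    by (rule pmf_expectation_bind[OF assms(1) assms(2) order.refl])
  also have "\<dots> = measure_pmf.expectation p (\<lambda>s. measure_pmf.expectation (K s) h)"
    by (rule integral_measure_pmf[OF assms(1), symmetric]) auto
  finally show ?thesis .
qed

lemma fin_beta: "finite (set_pmf (beta t1 t2))"
proof -
  have "set_pmf (beta t1 t2) \<subseteq> UNIV \<times> {..2}"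
    using set_beta3[of t1 t2] unfolding beta_def by auto
  then show ?thesis by (rule finite_subset) auto
qed

lemma fin_step: "finite (set_pmf (step t1 t2 j s))"
  unfolding step_def using fin_beta by (auto split: prod.splits)

lemma fin_DD: "finite (set_pmf (DD t1 t2 j))"
  by (induction j) (auto simp: fin_step)

lemma marg_DD: "map_pmf (\<lambda>(g,t,c,y). (c,y)) (DD t1 t2 (Suc j)) = beta t1 t2"
proof (induction j)
  case 0
  then show ?case by (simp add: bind_return_pmf step_def map_pmf_comp split_beta)
next
  case (Suc j)
  have "map_pmf (\<lambda>(g,t,c,y). (c,y)) (DD t1 t2 (Suc (Suc j))) =
        bind_pmf (DD t1 t2 (Suc j)) (\<lambda>s. return_pmf ((\<lambda>(g,t,c,y). (c,y)) s))"
    unfolding DD.simps(2)[of _ _ "Suc j"] map_bind_pmf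
    by (rule bind_pmf_cong[OF refl]) (auto simp: step_def map_pmf_comp split_beta)
  also have "\<dots> = map_pmf (\<lambda>(g,t,c,y). (c,y)) (DD t1 t2 (Suc j))" by (simp add: map_pmf_def)
  also have "\<dots> = beta t1 t2" by (rule Suc.IH)
  finally show ?case .
qed

lemma lin3:
  fixes f0 f1 f2 :: "'a \<Rightarrow> real"
  assumes "finite (set_pmf p)"
  shows "measure_pmf.expectation p (\<lambda>s. c0 * f0 s + c1 * f1 s + c2 * f2 s) =
    c0 * measure_pmf.expectation p f0 + c1 * measure_pmf.expectation p f1 + c2 * measure_pmf.expectation p f2"
  using assms by (simp add: integrable_measure_pmf_finite)

definition nu :: "real \<Rightarrow> real \<Rightarrow> nat \<Rightarrow> real" where
  "nu t1 t2 r = measure_pmf.expectation (beta t1 t2) (\<lambda>(b,x). if b then real x ^ r else 0)"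

definition Qf :: "real \<Rightarrow> real \<Rightarrow> real \<Rightarrow> (bool \<times> nat \<times> bool \<times> nat) pmf \<Rightarrow> real" where
  "Qf c0 c1 c2 p = measure_pmf.expectation p (\<lambda>(g,t,c,y). if g then c0 + c1 * real t + c2 * (real t)^2 else 0)"

lemma Qf_lin: "finite (set_pmf p) \<Longrightarrow> Qf c0 c1 c2 p = c0 * Qf 1 0 0 p + c1 * Qf 0 1 0 p + c2 * Qf 0 0 1 p"
  unfolding Qf_def
  by (subst lin3[symmetric]) (auto intro!: Bochner_Integration.integral_cong simp: split_beta)

lemma beta_poly:
  "measure_pmf.expectation (beta t1 t2) (\<lambda>(b,x). if b then c0 + c1 * (real t + real x) + c2 * (real t + real x)^2 else 0)
   = (c0 + c1 * real t + c2 * (real t)^2) * nu t1 t2 0 + (c1 + 2 * c2 * real t) * nu t1 t2 1 + c2 * nu t1 t2 2"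
proof -
  have "measure_pmf.expectation (beta t1 t2) (\<lambda>(b,x). if b then c0 + c1 * (real t + real x) + c2 * (real t + real x)^2 else 0)
    = measure_pmf.expectation (beta t1 t2) (\<lambda>s. (c0 + c1 * real t + c2 * (real t)^2) * (\<lambda>(b,x). if b then real x ^ 0 else 0) s
        + (c1 + 2 * c2 * real t) * (\<lambda>(b,x). if b then real x ^ 1 else 0) s + c2 * (\<lambda>(b,x). if b then real x ^ 2 else 0) s)"
    by (rule Bochner_Integration.integral_cong) (auto simp: power2_eq_square algebra_simps)
  also have "\<dots> = (c0 + c1 * real t + c2 * (real t)^2) * nu t1 t2 0 + (c1 + 2 * c2 * real t) * nu t1 t2 1 + c2 * nu t1 t2 2"
    unfolding nu_def by (rule lin3[OF fin_beta])
  finally show ?thesis .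
qed

lemma Qf_rec:
  "Qf c0 c1 c2 (DD t1 t2 (Suc j)) =
   Qf (c0 * nu t1 t2 0 + c1 * nu t1 t2 1 + c2 * nu t1 t2 2) (c1 * nu t1 t2 0 + 2 * c2 * nu t1 t2 1) (c2 * nu t1 t2 0) (DD t1 t2 j)"
proof -
  have "Qf c0 c1 c2 (DD t1 t2 (Suc j)) = measure_pmf.expectation (DD t1 t2 j)
     (\<lambda>s. measure_pmf.expectation (step t1 t2 j s) (\<lambda>(g,t,c,y). if g then c0 + c1 * real t + c2 * (real t)^2 else 0))"
    unfolding Qf_def DD.simps by (rule E_bind_fin[OF fin_DD fin_step])
  also have "\<dots> = Qf (c0 * nu t1 t2 0 + c1 * nu t1 t2 1 + c2 * nu t1 t2 2) (c1 * nu t1 t2 0 + 2 * c2 * nu t1 t2 1) (c2 * nu t1 t2 0) (DD t1 t2 j)"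
    unfolding Qf_def
  proof (rule Bochner_Integration.integral_cong[OF refl])
    fix s :: "bool \<times> nat \<times> bool \<times> nat"
    obtain g t c y where s: "s = (g,t,c,y)" by (cases s) auto
    show "measure_pmf.expectation (step t1 t2 j s) (\<lambda>(g,t,c,y). if g then c0 + c1 * real t + c2 * (real t)^2 else 0) =
      (\<lambda>(g,t,c,y). if g then (c0 * nu t1 t2 0 + c1 * nu t1 t2 1 + c2 * nu t1 t2 2) + (c1 * nu t1 t2 0 + 2 * c2 * nu t1 t2 1) * real t + (c2 * nu t1 t2 0) * (real t)^2 else 0) s"
    proof (cases g)
      case True
      have "measure_pmf.expectation (step t1 t2 j s) (\<lambda>(g,t,c,y). if g then c0 + c1 * real t + c2 * (real t)^2 else 0)
        = measure_pmf.expectation (beta t1 t2) (\<lambda>(b,x). if b then c0 + c1 * (real t + real x) + c2 * (real t + real x)^2 else 0)"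
        using True s by (simp add: step_def split_beta) (rule Bochner_Integration.integral_cong, auto)
      also have "\<dots> = (c0 + c1 * real t + c2 * (real t)^2) * nu t1 t2 0 + (c1 + 2 * c2 * real t) * nu t1 t2 1 + c2 * nu t1 t2 2"
        by (rule beta_poly)
      finally show ?thesis using True s by (simp add: algebra_simps power2_eq_square)
    next
      case False
      then show ?thesis using s by (simp add: step_def)
    qed
  qed
  finally show ?thesis .
qed

lemma Qf_base: "Qf c0 c1 c2 (DD t1 t2 0) = c0"
  by (simp add: Qf_def)

lemma mom_rec:
  fixes t1 t2 j
  defines "a (r::nat) \<equiv> Qf (if r = 0 then 1 else 0) (if r = 1 then 1 else 0) (if r = 2 then 1 else 0) (DD t1 t2 j)"
    and "a' (r::nat) \<equiv> Qf (if r = 0 then 1 else 0) (if r = 1 then 1 else 0) (if r = 2 then 1 else 0) (DD t1 t2 (Suc j))"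
    and "v \<equiv> nu t1 t2"
  shows "a' 0 = v 0 * a 0" "a' 1 = v 1 * a 0 + v 0 * a 1" "a' 2 = v 2 * a 0 + 2 * v 1 * a 1 + v 0 * a 2"
proof -
  have L: "Qf c0 c1 c2 (DD t1 t2 j) = c0 * a 0 + c1 * a 1 + c2 * a 2" for c0 c1 c2
    unfolding a_def by (subst Qf_lin[OF fin_DD]) simp
  show "a' 0 = v 0 * a 0" unfolding a'_def v_def Qf_rec by (simp add: L v_def)
  show "a' 1 = v 1 * a 0 + v 0 * a 1" unfolding a'_def v_def Qf_rec by (simp add: L v_def)
  show "a' 2 = v 2 * a 0 + 2 * v 1 * a 1 + v 0 * a 2" unfolding a'_def v_def Qf_rec by (simp add: L v_def)
qed

lemma mom_closed:
  fixes t1 t2 :: real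
  defines "a (r::nat) j \<equiv> Qf (if r = 0 then 1 else 0) (if r = 1 then 1 else 0) (if r = 2 then 1 else 0) (DD t1 t2 j)"
    and "v \<equiv> nu t1 t2"
  shows "a 0 j = v 0 ^ j \<and> (a 2 j * a 0 j - (a 1 j)^2) * (v 0)^2 = real j * (a 0 j)^2 * (v 0 * v 2 - (v 1)^2)"
proof (induction j)
  case 0 then show ?case by (simp add: a_def Qf_def)
next
  case (Suc j)
  have r: "a 0 (Suc j) = v 0 * a 0 j" "a 1 (Suc j) = v 1 * a 0 j + v 0 * a 1 j"
     "a 2 (Suc j) = v 2 * a 0 j + 2 * v 1 * a 1 j + v 0 * a 2 j"
    using mom_rec[of t1 t2 j] unfolding a_def v_def by auto
  from Suc have h0: "a 0 j = v 0 ^ j" and h: "(a 2 j * a 0 j - (a 1 j)^2) * (v 0)^2 = real j * (a 0 j)^2 * (v 0 * v 2 - (v 1)^2)"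
    by auto
  have eq: "(a 2 (Suc j) * a 0 (Suc j) - (a 1 (Suc j))^2) = (v 0)^2 * (a 2 j * a 0 j - (a 1 j)^2) + (a 0 j)^2 * (v 0 * v 2 - (v 1)^2)"
    unfolding r by (simp add: algebra_simps power2_eq_square)
  have "(a 2 (Suc j) * a 0 (Suc j) - (a 1 (Suc j))^2) * (v 0)^2 =
      (v 0)^2 * ((a 2 j * a 0 j - (a 1 j)^2) * (v 0)^2) + (v 0)^2 * (a 0 j)^2 * (v 0 * v 2 - (v 1)^2)"
    unfolding eq by (simp add: algebra_simps)
  also have "\<dots> = real (Suc j) * (a 0 (Suc j))^2 * (v 0 * v 2 - (v 1)^2)"
    unfolding h r(1) by (simp add: algebra_simps power2_eq_square)
  finally show ?case using r(1) h0 by simp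
qed

lemma int_bounded:
  fixes f :: "_ \<Rightarrow> real"
  shows "(\<And>x. x \<in> set_pmf p \<Longrightarrow> \<bar>f x\<bar> \<le> Bd) \<Longrightarrow> integrable (measure_pmf p) f"
  by (intro measure_pmf.integrable_const_bound[where B=Bd]) (auto simp: AE_measure_pmf_iff)

lemma condE:
  fixes h :: "_ \<Rightarrow> real"
  assumes fin: "finite (set_pmf p)" and ne: "set_pmf p \<inter> SS \<noteq> {}"
  shows "measure_pmf.expectation (cond_pmf p SS) h = measure_pmf.expectation p (\<lambda>x. if x \<in> SS then h x else 0) / measure_pmf.prob p SS"
proof -
  have "measure_pmf.expectation (cond_pmf p SS) h = (\<Sum>a\<in>set_pmf p. h a * pmf (cond_pmf p SS) a)"
    by (rule integral_measure_pmf_real[OF fin]) (use ne in auto)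
  also have "\<dots> = (\<Sum>a\<in>set_pmf p. (if a \<in> SS then h a else 0) * pmf p a) / measure_pmf.prob p SS"
    by (simp add: pmf_cond[OF ne] sum_divide_distrib) (rule sum.cong, auto)
  also have "(\<Sum>a\<in>set_pmf p. (if a \<in> SS then h a else 0) * pmf p a) = measure_pmf.expectation p (\<lambda>x. if x \<in> SS then h x else 0)"
    by (rule integral_measure_pmf_real[OF fin, symmetric]) auto
  finally show ?thesis .
qed

lemma nu_nonneg: "nu t1 t2 0 \<ge> 0"
  unfolding nu_def by (rule integral_nonneg_AE) auto

lemma cond_beta_var:
  assumes v0: "nu t1 t2 0 > 0"
  shows "measure_pmf.variance (cond_pmf (beta t1 t2) {p. fst p}) (\<lambda>p. real (snd p))
     = nu t1 t2 2 / nu t1 t2 0 - (nu t1 t2 1 / nu t1 t2 0)^2"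
proof -
  let ?v = "nu t1 t2"
  have pr: "measure_pmf.prob (beta t1 t2) {p. fst p} = ?v 0"
  proof -
    have "measure_pmf.prob (beta t1 t2) {p. fst p} = measure_pmf.expectation (beta t1 t2) (indicator {p. fst p})"
      by simp
    also have "\<dots> = ?v 0" unfolding nu_def
      by (rule Bochner_Integration.integral_cong) (auto simp: indicator_def)
    finally show ?thesis .
  qed
  have ne: "set_pmf (beta t1 t2) \<inter> {p. fst p} \<noteq> {}"
  proof
    assume "set_pmf (beta t1 t2) \<inter> {p. fst p} = {}"
    then have "measure_pmf.prob (beta t1 t2) {p. fst p} = 0"
      by (simp add: measure_pmf_zero_iff)
    then show False using pr v0 by simp
  qed
  have E: "measure_pmf.expectation (cond_pmf (beta t1 t2) {p. fst p}) h =
     measure_pmf.expectation (beta t1 t2) (\<lambda>x. if fst x then h x else 0) / ?v 0" for h :: "_ \<Rightarrow> real"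
    using condE[OF fin_beta ne, of h] pr by simp
  define mc where "mc = ?v 1 / ?v 0"
  have m: "measure_pmf.expectation (cond_pmf (beta t1 t2) {p. fst p}) (\<lambda>p. real (snd p)) = mc"
    unfolding E mc_def nu_def
    by (rule arg_cong[where f="\<lambda>z. z / _"], rule Bochner_Integration.integral_cong) auto
  have "measure_pmf.variance (cond_pmf (beta t1 t2) {p. fst p}) (\<lambda>p. real (snd p)) =
      measure_pmf.expectation (beta t1 t2) (\<lambda>s. (mc^2) * (\<lambda>(b,x). if b then real x ^ 0 else 0) s
        + (- 2 * mc) * (\<lambda>(b,x). if b then real x ^ 1 else 0) s + 1 * (\<lambda>(b,x). if b then real x ^ 2 else 0) s) / ?v 0"
    unfolding m E
    by (rule arg_cong[where f="\<lambda>z. z / ?v 0"], rule Bochner_Integration.integral_cong)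
       (auto simp: power2_eq_square algebra_simps)
  also have "\<dots> = (mc^2 * ?v 0 - 2 * mc * ?v 1 + ?v 2) / ?v 0"
    unfolding lin3[OF fin_beta] nu_def by simp
  also have "\<dots> = ?v 2 / ?v 0 - (?v 1 / ?v 0)^2"
    using v0 unfolding mc_def by (simp add: field_simps power2_eq_square)
  finally show ?thesis .
qed

theorem lemma3:
  fixes n :: nat and f :: real
  assumes "n \<ge> 4" and "even n" and "f > 0"
  shows "measure_pmf.variance (msc (caterpillar n f)) (\<lambda>\<omega>. real (dab n f \<omega>))
         \<ge> (real n - 2) / 2
           * measure_pmf.variance (cond_pmf (msc (caterpillar n f)) (Fev 1)) (\<lambda>\<omega>. real (Xcnt 1 \<omega>))
           * measure_pmf.prob (msc (caterpillar n f)) (Fall n)"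
proof -
  define h where "h = n div 2"
  define j0 where "j0 = h - 2"
  define k where "k = Suc j0"
  define g where "g = cat_g n"
  have h2: "h \<ge> 2" using assms(1) unfolding h_def by simp
  have kh: "k = h - 1" using h2 unfolding k_def j0_def by simp
  have nk: "(real n - 2) / 2 = real k"
  proof -
    have "n = 2 * h" using assms(2) unfolding h_def by simp
    then show ?thesis using h2 kh by (simp add: of_nat_diff)
  qed
  have cat: "caterpillar n f = wtB f g j0 B"
    unfolding caterpillar_def wtB_def Let_def g_def h_def[symmetric] j0_def
    using h2 by (simp add: numeral_2_eq_2 Suc_diff_Suc)
  define \<mu> where "\<mu> = msc (wtB f g j0 B)"
  have lv: "leaves (caterpillar n f) = insert B (S k)" unfolding cat leaves_wtB k_def ..
  have dab: "dab n f \<omega> = gt_dist (insert B (S k)) (fst \<omega>) A B" for \<omega>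
    unfolding dab_def lv ..
  have Fall: "Fall n = {\<omega>. Gj k (snd \<omega>)}"
  proof -
    have "(n - 2) div 2 = k" using kh unfolding h_def by simp
    then show ?thesis unfolding Fall_def Fev_def Gj_def by auto
  qed
  have law: "map_pmf (Phi k) \<mu> = map_pmf hfin (DD f g k)"
    unfolding \<mu>_def k_def by (rule msc_law)
  define v where "v = nu f g"
  define a where "a r = Qf (if r = 0 then 1 else 0) (if r = 1 then 1 else 0) (if r = 2 then 1 else 0) (DD f g k)" for r :: nat
  have closed: "a 0 = v 0 ^ k" "(a 2 * a 0 - (a 1)^2) * (v 0)^2 = real k * (a 0)^2 * (v 0 * v 2 - (v 1)^2)"
    using mom_closed[of f g k] unfolding a_def v_def by auto
  have PF: "measure_pmf.prob \<mu> (Fall n) = a 0"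
  proof -
    have "measure_pmf.prob \<mu> (Fall n) = measure_pmf.expectation \<mu> (indicator (Fall n))" by simp
    also have "\<dots> = measure_pmf.expectation \<mu> (\<lambda>\<omega>. (\<lambda>(g,t,c,y). if g then 1 else 0) (Phi k \<omega>))"
      by (rule Bochner_Integration.integral_cong) (auto simp: Fall Phi_def indicator_def)
    also have "\<dots> = measure_pmf.expectation (map_pmf (Phi k) \<mu>) (\<lambda>(g,t,c,y). if g then 1 else 0)" by simp
    also have "\<dots> = a 0" unfolding law a_def Qf_def
      by (simp, rule Bochner_Integration.integral_cong) (auto simp: hfin_def)
    finally show ?thesis .
  qed
  have a0nn: "a 0 \<ge> 0" using closed(1) nu_nonneg[of f g] unfolding v_def by simp
  define Th where "Th \<omega> = (card (snd \<omega> (Z 1)) = 1, Xcnt 1 \<omega>)" for \<omega> :: "cnode event list \<times> (cnode \<Rightarrow> cnode set set)"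
  have mTh: "map_pmf Th \<mu> = beta f g"
  proof -
    have "map_pmf Th \<mu> = map_pmf (\<lambda>(g,t,c,y). (c,y)) (map_pmf (Phi k) \<mu>)"
      unfolding map_pmf_comp by (rule map_pmf_cong) (auto simp: Th_def Phi_def)
    also have "\<dots> = map_pmf (\<lambda>(g,t,c,y). (c,y)) (DD f g k)"
      unfolding law map_pmf_comp by (rule map_pmf_cong) (auto simp: hfin_def)
    also have "\<dots> = beta f g" unfolding k_def by (rule marg_DD)
    finally show ?thesis .
  qed
  have Fev1: "Fev 1 = Th -` {p. fst p}" by (auto simp: Fev_def Th_def)
  define Kb where "Kb = 2 * (card (insert B (S k)) + nlv (wtB f g j0 B))"
  have finS: "finite (insert B (S k))" by (simp add: S_def)
  have bnd: "dab n f \<omega> \<le> Kb" if "\<omega> \<in> set_pmf \<mu>" for \<omega>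
    using gt_dist_le[OF finS, of "fst \<omega>" A B] msc_len[OF that[unfolded \<mu>_def]]
    unfolding dab Kb_def by simp
  define mm where "mm = measure_pmf.expectation \<mu> (\<lambda>\<omega>. real (dab n f \<omega>))"
  have intg: "integrable (measure_pmf \<mu>) (\<lambda>\<omega>. (real (dab n f \<omega>) - mm)^2)"
  proof (rule int_bounded)
    fix \<omega> assume "\<omega> \<in> set_pmf \<mu>"
    then have "real (dab n f \<omega>) \<le> real Kb" using bnd by simp
    then have "\<bar>real (dab n f \<omega>) - mm\<bar> \<le> real Kb + \<bar>mm\<bar>" by linarith
    then have "\<bar>real (dab n f \<omega>) - mm\<bar>^2 \<le> (real Kb + \<bar>mm\<bar>)^2" by (rule power_mono) simp
    then show "\<bar>(real (dab n f \<omega>) - mm)^2\<bar> \<le> (real Kb + \<bar>mm\<bar>)^2" by simp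
  qed
  have var_ge: "measure_pmf.variance \<mu> (\<lambda>\<omega>. real (dab n f \<omega>)) \<ge> (1 - mm)^2 * a 0 + 2 * (1 - mm) * a 1 + a 2"
  proof -
    have "(1 - mm)^2 * a 0 + 2 * (1 - mm) * a 1 + a 2 = Qf ((1 - mm)^2) (2 * (1 - mm)) 1 (DD f g k)"
      unfolding a_def by (subst Qf_lin[OF fin_DD]) simp
    also have "\<dots> = measure_pmf.expectation (map_pmf hfin (DD f g k)) (\<lambda>(g,t,c,y). if g then (real t - mm)^2 else 0)"
      unfolding Qf_def integral_map_pmf
    proof (rule Bochner_Integration.integral_cong[OF refl])
      fix s :: "bool \<times> nat \<times> bool \<times> nat"
      obtain g t c y where s: "s = (g,t,c,y)" by (cases s) auto
      have "(real (1 + t) - mm)^2 = (1 - mm)^2 + 2 * (1 - mm) * real t + 1 * (real t)^2"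
        by (simp add: power2_eq_square algebra_simps)
      then show "(\<lambda>(g,t,c,y). if g then (1 - mm)^2 + 2 * (1 - mm) * real t + 1 * (real t)^2 else 0) s =
         (\<lambda>(g,t,c,y). if g then (real t - mm)^2 else 0) (hfin s)"
        unfolding s hfin_def by simp
    qed
    also have "\<dots> = measure_pmf.expectation \<mu> (\<lambda>\<omega>. (\<lambda>(g,t,c,y). if g then (real t - mm)^2 else 0) (Phi k \<omega>))"
      unfolding law[symmetric] integral_map_pmf ..
    also have "\<dots> = measure_pmf.expectation \<mu> (\<lambda>\<omega>. if Gj k (snd \<omega>) then (real (dab n f \<omega>) - mm)^2 else 0)"
      by (rule Bochner_Integration.integral_cong[OF refl]) (simp add: Phi_def dab)
    also have "\<dots> \<le> measure_pmf.expectation \<mu> (\<lambda>\<omega>. (real (dab n f \<omega>) - mm)^2)"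
      by (rule integral_mono'[OF intg]) auto
    also have "\<dots> = measure_pmf.variance \<mu> (\<lambda>\<omega>. real (dab n f \<omega>))"
      unfolding mm_def ..
    finally show ?thesis .
  qed
  show ?thesis
  proof (cases "a 0 = 0")
    case True
    then show ?thesis using PF measure_pmf.variance_positive[of \<mu>] unfolding \<mu>_def cat by simp
  next
    case False
    then have a0p: "a 0 > 0" using a0nn by simp
    have v0p: "v 0 > 0"
    proof (rule ccontr)
      assume "\<not> v 0 > 0"
      then have "v 0 = 0" using nu_nonneg[of f g] unfolding v_def by simp
      then show False using closed(1) a0p unfolding k_def by simp
    qed
    have ne: "set_pmf \<mu> \<inter> Th -` {p. fst p} \<noteq> {}"
    proof
      assume "set_pmf \<mu> \<inter> Th -` {p. fst p} = {}"
      then have "set_pmf \<mu> \<inter> Fall n = {}" using Fev1 unfolding Fall Fev_def Gj_def k_def by auto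
      then have "measure_pmf.prob \<mu> (Fall n) = 0" by (simp add: measure_pmf_zero_iff)
      then show False using PF a0p by simp
    qed
    have VC: "measure_pmf.variance (cond_pmf \<mu> (Fev 1)) (\<lambda>\<omega>. real (Xcnt 1 \<omega>)) = v 2 / v 0 - (v 1 / v 0)^2"
    proof -
      have "measure_pmf.variance (cond_pmf \<mu> (Fev 1)) (\<lambda>\<omega>. real (Xcnt 1 \<omega>)) =
            measure_pmf.variance (map_pmf Th (cond_pmf \<mu> (Th -` {p. fst p}))) (\<lambda>p. real (snd p))"
        unfolding Fev1 by (simp add: Th_def)
      also have "\<dots> = measure_pmf.variance (cond_pmf (beta f g) {p. fst p}) (\<lambda>p. real (snd p))"
        unfolding cond_map_pmf[OF ne, symmetric] mTh ..
      also have "\<dots> = v 2 / v 0 - (v 1 / v 0)^2"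
        unfolding v_def by (rule cond_beta_var) (use v0p in \<open>simp add: v_def\<close>)
      finally show ?thesis .
    qed
    define u where "u = 1 - mm"
    have sq: "u^2 * a 0 + 2 * u * a 1 + a 2 \<ge> (a 2 * a 0 - (a 1)^2) / a 0"
    proof -
      have "0 \<le> (u * a 0 + a 1)^2 / a 0" using a0p by simp
      also have "(u * a 0 + a 1)^2 / a 0 = u^2 * a 0 + 2 * u * a 1 + a 2 - (a 2 * a 0 - (a 1)^2) / a 0"
        using a0p by (simp add: field_simps power2_eq_square)
      finally show ?thesis by simp
    qed
    have eqR: "(a 2 * a 0 - (a 1)^2) / a 0 = real k * (v 2 / v 0 - (v 1 / v 0)^2) * a 0"
    proof -
      have "(a 2 * a 0 - (a 1)^2) = real k * (a 0)^2 * (v 0 * v 2 - (v 1)^2) / (v 0)^2"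
        using closed(2) v0p by (simp add: field_simps)
      then show ?thesis using a0p v0p by (simp add: field_simps power2_eq_square)
    qed
    have "measure_pmf.variance \<mu> (\<lambda>\<omega>. real (dab n f \<omega>)) \<ge> real k * (v 2 / v 0 - (v 1 / v 0)^2) * a 0"
      using var_ge sq eqR unfolding u_def by linarith
    then show ?thesis using VC PF nk unfolding \<mu>_def cat by simp
  qed
qed

end
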